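(* Assume $\mathcal{D}_{\mathcal{X}}$ is absolutely continuous with respect to $\mathcal{Q}$ and $C_{\mathcal{X}}\ge\|d\mathcal{D}_{\mathcal{X}}/d\mathcal{Q}\|_\infty$. Then for every measurable $H:\mathcal{X}\to\mathbb{R}$ and every measurable $h^*:\mathcal{X}\to\{\pm1\}$, $$\Phi'(H,\mathrm{sign}(H))-\Phi'(H,h^* )\ge\mathrm{corr}_{\mathcal{D}}(h^* )-\mathrm{corr}_{\mathcal{D}}(\mathrm{sign}(H)).$$
   Context: $\mathcal{D}$ is a distribution on $\mathcal{X}\times\{\pm1\}$ with feature marginal $\mathcal{D}_{\mathcal{X}}$, and $\mathcal{Q}$ is another distribution on $\mathcal{X}$. $\mathrm{corr}_{\mathcal{D}}(h)=\mathbb{E}_{(x,y)\sim\mathcal{D}}[yh(x)]$. $\mathrm{sign}(z)=1$ if $z\ge0$, else $-1$. $\psi$ is the Huber loss ($\psi(z)=|z|-\tfrac12$ for $|z|>1$, $\tfrac12z^2$ for $|z|\le1$), $\psi'(z)=\mathrm{sign}(z)\min\{1,|z|\}$. For measurable $H:\mathcal{X}\to\mathbb{R}$ and bounded measurable $h$, $\Phi'(H,h)=C_{\mathcal{X}}\,\mathbb{E}_{x\sim\mathcal{Q}}[\psi'(H(x))h(x)]-\mathbb{E}_{(x,y)\sim\mathcal{D}}[yh(x)]$. *)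

theory Defs
  imports "HOL-Probability.Probability"
begin

definition sign_pm :: "real \<Rightarrow> real" where
  "sign_pm z = (if z \<ge> 0 then 1 else -1)"

text \<open>derivative of the Huber loss\<close>
definition huber_deriv :: "real \<Rightarrow> real" where
  "huber_deriv z = sign_pm z * min 1 \<bar>z\<bar>"

definition corr :: "('a \<times> real) measure \<Rightarrow> ('a \<Rightarrow> real) \<Rightarrow> real" where
  "corr D h = (\<integral>p. snd p * h (fst p) \<partial>D)"

definition Phi' :: "real \<Rightarrow> 'a measure \<Rightarrow> ('a \<times> real) measure \<Rightarrow> ('a \<Rightarrow> real) \<Rightarrow> ('a \<Rightarrow> real) \<Rightarrow> real" where
  "Phi' C Q D H h = C * (\<integral>x. huber_deriv (H x) * h x \<partial>Q) - (\<integral>p. snd p * h (fst p) \<partial>D)"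

end

theory Submission
  imports Defs
begin

theorem mainTheorem5:
  fixes Q :: "'a measure" and D :: "('a \<times> real) measure" and C :: real
    and H hstar :: "'a \<Rightarrow> real"
  assumes Q_prob: "prob_space Q"
    and D_prob: "prob_space D"
    and D_sets: "sets D = sets (Q \<Otimes>\<^sub>M count_space {-1, 1})"
    and ac: "absolutely_continuous Q (distr D Q fst)"
    and C_bound: "esssup Q (RN_deriv Q (distr D Q fst)) \<le> ennreal C"
    and H_meas: "H \<in> borel_measurable Q"
    and hstar_meas: "hstar \<in> borel_measurable Q"
    and hstar_pm: "\<forall>x\<in>space Q. hstar x \<in> {-1, 1}"
  shows "Phi' C Q D H (\<lambda>x. sign_pm (H x)) - Phi' C Q D H hstar
           \<ge> corr D hstar - corr D (\<lambda>x. sign_pm (H x))"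
proof -
  interpret Q: prob_space Q by (rule Q_prob)
  interpret D: prob_space D by (rule D_prob)
  define N where "N = distr D Q fst"
  have fst_meas: "fst \<in> measurable D Q"
    using measurable_cong_sets[OF D_sets refl] measurable_fst by blast
  have C0: "C \<ge> 0"
  proof (rule ccontr)
    assume "\<not> C \<ge> 0"
    then have "ennreal C = 0" by (simp add: ennreal_eq_0_iff)
    then have AE0: "AE x in Q. RN_deriv Q N x = 0"
      using esssup_AE[of "RN_deriv Q N" Q] C_bound unfolding N_def
      by (auto elim!: eventually_mono)
    have sN: "sets N = sets Q" unfolding N_def by simp
    have dN: "density Q (RN_deriv Q N) = N"
      using Q.density_RN_deriv[OF ac[folded N_def] sN] by simp
    have "emeasure (density Q (RN_deriv Q N)) (space Q) = (\<integral>\<^sup>+x. RN_deriv Q N x \<partial>Q)"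
      by (simp add: emeasure_density nn_integral_set_ennreal)
    then have "emeasure N (space Q) = (\<integral>\<^sup>+x. RN_deriv Q N x \<partial>Q)"
      by (simp only: dN)
    also have "\<dots> = 0" using AE0 by (simp add: nn_integral_0_iff_AE)
    finally have "emeasure N (space Q) = 0" .
    moreover have "emeasure N (space Q) = 1"
    proof -
      have "fst -` space Q \<inter> space D = space D"
        using measurable_space[OF fst_meas] by auto
      then show ?thesis unfolding N_def
        using fst_meas by (simp add: emeasure_distr D.emeasure_space_1)
    qed
    ultimately show False by simp
  qed
  let ?f = "\<lambda>x. huber_deriv (H x) * sign_pm (H x)"
  let ?g = "\<lambda>x. huber_deriv (H x) * hstar x"
  have bd: "\<bar>huber_deriv z\<bar> \<le> 1" for z
    by (simp add: huber_deriv_def sign_pm_def abs_mult)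
  have sm: "(\<lambda>x. sign_pm (H x)) \<in> borel_measurable Q"
    unfolding sign_pm_def using H_meas by measurable
  have hm: "(\<lambda>x. huber_deriv (H x)) \<in> borel_measurable Q"
    unfolding huber_deriv_def sign_pm_def using H_meas by measurable
  have intf: "integrable Q ?f"
  proof (rule Q.integrable_const_bound[where B=1])
    show "AE x in Q. norm (?f x) \<le> 1"
      using bd by (auto simp: abs_mult sign_pm_def)
  qed (intro borel_measurable_times hm sm)
  have intg: "integrable Q ?g"
  proof (rule Q.integrable_const_bound[where B=1])
    show "AE x in Q. norm (?g x) \<le> 1"
    proof (rule AE_I2)
      fix x assume "x \<in> space Q"
      then have "\<bar>hstar x\<bar> = 1" using hstar_pm by auto
      then show "norm (?g x) \<le> 1" using bd[of "H x"] by (simp add: abs_mult)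
    qed
  qed (intro borel_measurable_times hm hstar_meas)
  have le: "(\<integral>x. ?g x \<partial>Q) \<le> (\<integral>x. ?f x \<partial>Q)"
  proof (rule integral_mono[OF intg intf])
    fix x assume "x \<in> space Q"
    then have hx: "hstar x = 1 \<or> hstar x = -1" using hstar_pm by auto
    show "?g x \<le> ?f x"
      using hx by (auto simp: huber_deriv_def sign_pm_def)
  qed
  have "C * (\<integral>x. ?g x \<partial>Q) \<le> C * (\<integral>x. ?f x \<partial>Q)"
    using le C0 by (rule mult_left_mono)
  then show ?thesis unfolding Phi'_def corr_def by simp
qed

end
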